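(* Let $Q$ be the rate matrix of an irreducible BD process on $\mathcal{M}=\{0,1\}^k$ that is reversible with respect to its limiting distribution $\pi$, with $\pi(m)>0$ for all $m$. Let $(\varepsilon_s)_{s\ge1}$ be a sequence with $\varepsilon_s>0$ and $\varepsilon_s q_i(m)\le 1$ for all $s,i,m$, satisfying $$\lim_{s\to\infty}\varepsilon_s=0\quad\text{and}\quad\sum_{s=1}^\infty\varepsilon_s=\infty.$$ Consider the time-inhomogeneous Markov chain on $\mathcal{M}$ whose transition matrix at iteration $s$ is $P_{\varepsilon_s}$ (defined below), with arbitrary initial distribution $\mu_0$, and let $\mu_s=\mu_0P_{\varepsilon_1}P_{\varepsilon_2}\cdots P_{\varepsilon_s}$ be its distribution after $s$ iterations. Then for every vector norm $\|\cdot\|$ on $\mathbb{R}^l$, $$\lim_{s\to\infty}\|\mu_s-\pi\|=0.$$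
   Context: $\mathcal{M}=\{0,1\}^k$, $l=2^k$; for $m\in\mathcal{M}$, $m^i$ is $m$ with coordinate $i$ flipped. The BD process is the continuous-time Markov chain with rate matrix $Q(m,m^i)=q_i(m)\ge0$, $Q(m,m)=-\sum_{i=1}^k q_i(m)$, $Q(m,m')=0$ otherwise. Reversibility: $\pi(m)Q(m,m')=\pi(m')Q(m',m)$ for all $m,m'$. For models $m,m'$, $H_{m,m'}$ is the set of coordinates where they differ, and for $\varepsilon>0$ $$P_\varepsilon(m,m')=\prod_{i\in H_{m,m'}} \varepsilon\, q_i(m)\prod_{i\notin H_{m,m'}}\bigl(1-\varepsilon\, q_i(m)\bigr),$$ i.e. from state $m$ each coordinate $i$ is flipped independently with probability $\varepsilon q_i(m)$. Distributions are row vectors in $\mathbb{R}^l$. *)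

theory Defs
  imports "HOL-Analysis.Analysis"
begin

text \<open>Models: {0,1}^k is represented as the subsets of {..<k}
  (m corresponds to its set of coordinates equal to 1).\<close>

definition models :: "nat \<Rightarrow> nat set set" where
  "models k = Pow {..<k}"

definition flip :: "nat set \<Rightarrow> nat \<Rightarrow> nat set" where
  "flip m i = m - {i} \<union> ({i} - m)"

definition Hdiff :: "nat set \<Rightarrow> nat set \<Rightarrow> nat set" where
  "Hdiff m m' = (m - m') \<union> (m' - m)"

definition Qrate :: "nat \<Rightarrow> (nat \<Rightarrow> nat set \<Rightarrow> real) \<Rightarrow> nat set \<Rightarrow> nat set \<Rightarrow> real" where
  "Qrate k q m m' =
     (if m = m' then - (\<Sum>i<k. q i m)
      else if (\<exists>i<k. m' = flip m i) then q (THE i. i < k \<and> m' = flip m i) m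
      else 0)"

definition irreducible_Q :: "nat \<Rightarrow> (nat set \<Rightarrow> nat set \<Rightarrow> real) \<Rightarrow> bool" where
  "irreducible_Q k Q \<longleftrightarrow>
     (\<forall>m\<in>models k. \<forall>m'\<in>models k.
        (m, m') \<in> {(a, b). a \<in> models k \<and> b \<in> models k \<and> a \<noteq> b \<and> Q a b > 0}\<^sup>*)"

definition is_distribution :: "nat \<Rightarrow> (nat set \<Rightarrow> real) \<Rightarrow> bool" where
  "is_distribution k p \<longleftrightarrow> (\<forall>m\<in>models k. p m \<ge> 0) \<and> (\<Sum>m\<in>models k. p m) = 1"

text \<open>Stationarity pi Q = 0 (for an irreducible finite CTMC this characterises
  the limiting distribution).\<close>
definition stationary_Q :: "nat \<Rightarrow> (nat set \<Rightarrow> nat set \<Rightarrow> real) \<Rightarrow> (nat set \<Rightarrow> real) \<Rightarrow> bool" where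
  "stationary_Q k Q p \<longleftrightarrow> (\<forall>m'\<in>models k. (\<Sum>m\<in>models k. p m * Q m m') = 0)"

definition reversible_Q :: "nat \<Rightarrow> (nat set \<Rightarrow> nat set \<Rightarrow> real) \<Rightarrow> (nat set \<Rightarrow> real) \<Rightarrow> bool" where
  "reversible_Q k Q p \<longleftrightarrow> (\<forall>m\<in>models k. \<forall>m'\<in>models k. p m * Q m m' = p m' * Q m' m)"

definition Peps :: "nat \<Rightarrow> (nat \<Rightarrow> nat set \<Rightarrow> real) \<Rightarrow> real \<Rightarrow> nat set \<Rightarrow> nat set \<Rightarrow> real" where
  "Peps k q e m m' =
     (\<Prod>i\<in>Hdiff m m'. e * q i m) * (\<Prod>i\<in>{..<k} - Hdiff m m'. 1 - e * q i m)"

fun mu_seq :: "nat \<Rightarrow> (nat \<Rightarrow> nat set \<Rightarrow> real) \<Rightarrow> (nat \<Rightarrow> real) \<Rightarrow> (nat set \<Rightarrow> real)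
                 \<Rightarrow> nat \<Rightarrow> nat set \<Rightarrow> real" where
  "mu_seq k q eps mu0 0 = mu0"
| "mu_seq k q eps mu0 (Suc s) =
     (\<lambda>m'. \<Sum>m\<in>models k. mu_seq k q eps mu0 s m * Peps k q (eps (Suc s)) m m')"

text \<open>A norm on R^l, l = 2^k, where vectors are functions on models k
  (entries outside models k are required to be 0).\<close>
definition vecs :: "nat \<Rightarrow> (nat set \<Rightarrow> real) set" where
  "vecs k = {v. \<forall>m. m \<notin> models k \<longrightarrow> v m = 0}"

definition is_norm_on :: "nat \<Rightarrow> ((nat set \<Rightarrow> real) \<Rightarrow> real) \<Rightarrow> bool" where
  "is_norm_on k N \<longleftrightarrow>
     (\<forall>v\<in>vecs k. N v \<ge> 0 \<and> (N v = 0 \<longleftrightarrow> v = (\<lambda>_. 0))) \<and>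
     (\<forall>v\<in>vecs k. \<forall>c. N (\<lambda>m. c * v m) = \<bar>c\<bar> * N v) \<and>
     (\<forall>v\<in>vecs k. \<forall>w\<in>vecs k. N (\<lambda>m. v m + w m) \<le> N v + N w)"

end

theory Submission
  imports Defs
begin


lemma Hdiff_sub: "m \<subseteq> K \<Longrightarrow> m' \<subseteq> K \<Longrightarrow> Hdiff m m' \<subseteq> K"
  by (auto simp: Hdiff_def)
lemma Hdiff_inv: "Hdiff m (Hdiff m X) = X"
  by (auto simp: Hdiff_def)
lemma Hdiff_self: "Hdiff m m = {}"
  by (auto simp: Hdiff_def)
lemma Hdiff_flip: "Hdiff m (flip m i) = {i}"
  by (auto simp: Hdiff_def flip_def)
lemma flip_inj: "flip m i = flip m j \<Longrightarrow> i = j"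
  by (auto simp: flip_def)

lemma models_finite: "finite (models k)"
  by (simp add: models_def)

lemma Peps_rowsum:
  assumes "m \<in> models k"
  shows "(\<Sum>m'\<in>models k. Peps k q e m m') = 1"
proof -
  let ?K = "{..<k}"
  let ?g = "\<lambda>H. (\<Prod>i\<in>H. e * q i m) * (\<Prod>i\<in>?K - H. 1 - e * q i m)"
  have "(\<Sum>m'\<in>models k. Peps k q e m m') = (\<Sum>H\<in>Pow ?K. ?g H)"
    unfolding Peps_def models_def
    by (rule sum.reindex_bij_witness[where i="Hdiff m" and j="Hdiff m"])
       (use assms in \<open>auto simp: Hdiff_inv models_def Hdiff_def\<close>)
  also have "\<dots> = (\<Prod>i\<in>?K. e * q i m + (1 - e * q i m))"
    by (rule prod_add[symmetric]) simp
  also have "\<dots> = 1" by simp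
  finally show ?thesis .
qed

lemma prod_one_minus_bounds:
  fixes a :: "nat \<Rightarrow> real"
  assumes "finite A" "\<forall>i\<in>A. 0 \<le> a i \<and> a i \<le> 1"
  shows "0 \<le> (\<Prod>i\<in>A. 1 - a i) \<and> (\<Prod>i\<in>A. 1 - a i) \<le> 1 \<and>
         1 - (\<Sum>i\<in>A. a i) \<le> (\<Prod>i\<in>A. 1 - a i) \<and>
         (\<Prod>i\<in>A. 1 - a i) \<le> 1 - (\<Sum>i\<in>A. a i) + (\<Sum>i\<in>A. a i)^2"
  using assms
proof (induction A rule: finite_induct)
  case empty
  then show ?case by simp
next
  case (insert x F)
  define P where "P = (\<Prod>i\<in>F. 1 - a i)"
  define S where "S = (\<Sum>i\<in>F. a i)"
  have IH: "0 \<le> P" "P \<le> 1" "1 - S \<le> P" "P \<le> 1 - S + S^2" using insert by (auto simp: P_def S_def)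
  have x: "0 \<le> a x" "a x \<le> 1" using insert by auto
  have S0: "0 \<le> S" unfolding S_def using insert by (auto intro: sum_nonneg)
  have e1: "(\<Prod>i\<in>insert x F. 1 - a i) = (1 - a x) * P" using insert by (simp add: P_def)
  have e2: "(\<Sum>i\<in>insert x F. a i) = a x + S" using insert by (simp add: S_def)
  have h1: "a x * (1 - P) \<le> a x * (2*S + a x)"
    using IH x S0 by (intro mult_left_mono) auto
  have h2: "0 \<le> a x * (1 - P)" using IH x by simp
  have h3: "0 \<le> (1 - a x) * P" "(1 - a x) * P \<le> 1" using IH x by (auto intro: mult_le_one)
  show ?case unfolding e1 e2 using IH x S0 h1 h2 h3
    by (auto simp: algebra_simps power2_eq_square)
qed

lemma Qrate_flip:
  assumes "i < k"
  shows "Qrate k q m (flip m i) = q i m"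
proof -
  have ne: "flip m i \<noteq> m" by (auto simp: flip_def)
  have "(THE j. j < k \<and> flip m i = flip m j) = i"
    using assms by (rule_tac the_equality) (auto dest: flip_inj)
  then show ?thesis using assms ne unfolding Qrate_def by auto
qed

lemma Peps_expand:
  assumes m: "m \<in> models k" and m': "m' \<in> models k"
    and a: "\<forall>i<k. 0 \<le> e * q i m \<and> e * q i m \<le> 1"
  shows "\<bar>Peps k q e m m' - (if m = m' then 1 else 0) - e * Qrate k q m m'\<bar>
           \<le> (e * (\<Sum>i<k. q i m))^2"
proof -
  let ?K = "{..<k}"
  define T where "T = (\<Sum>i<k. e * q i m)"
  have T: "e * (\<Sum>i<k. q i m) = T" unfolding T_def by (simp add: sum_distrib_left)
  have T0: "0 \<le> T" unfolding T_def using a by (auto intro: sum_nonneg)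
  have aT: "e * q i m \<le> T" if "i < k" for i
    unfolding T_def using a that by (intro member_le_sum) auto
  have H: "Hdiff m m' \<subseteq> ?K" using m m' by (auto simp: models_def Hdiff_def)
  have "\<bar>Peps k q e m m' - (if m = m' then 1 else 0) - e * Qrate k q m m'\<bar> \<le> T^2"
  proof (cases "m = m'")
    case True
    then have "Peps k q e m m' = (\<Prod>i\<in>?K. 1 - e * q i m)"
      by (simp add: Peps_def Hdiff_self)
    moreover have "Qrate k q m m' = - (\<Sum>i<k. q i m)" using True by (simp add: Qrate_def)
    moreover have "e * (- (\<Sum>i<k. q i m)) = - T" unfolding T_def by (simp add: sum_distrib_left)
    moreover have "1 - T \<le> (\<Prod>i\<in>?K. 1 - e * q i m)" "(\<Prod>i\<in>?K. 1 - e * q i m) \<le> 1 - T + T^2"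
      using prod_one_minus_bounds[of ?K "\<lambda>i. e * q i m"] a unfolding T_def by auto
    ultimately show ?thesis using True T0 by (simp add: abs_le_iff)
  next
    case False
    show ?thesis
    proof (cases "\<exists>i<k. m' = flip m i")
      case True
      then obtain i where i: "i < k" "m' = flip m i" by blast
      have Pe: "Peps k q e m m' = e * q i m * (\<Prod>j\<in>?K - {i}. 1 - e * q j m)"
        using i by (simp add: Peps_def Hdiff_flip)
      have Qe: "Qrate k q m m' = q i m" using i Qrate_flip by simp
      have b: "0 \<le> (\<Prod>j\<in>?K - {i}. 1 - e * q j m)" "(\<Prod>j\<in>?K - {i}. 1 - e * q j m) \<le> 1"
           "1 - (\<Sum>j\<in>?K - {i}. e * q j m) \<le> (\<Prod>j\<in>?K - {i}. 1 - e * q j m)"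
        using prod_one_minus_bounds[of "?K - {i}" "\<lambda>j. e * q j m"] a by auto
      have s: "(\<Sum>j\<in>?K - {i}. e * q j m) \<le> T"
        unfolding T_def using a by (intro sum_mono2) auto
      define p where "p = (\<Prod>j\<in>?K - {i}. 1 - e * q j m)"
      have xp: "e * q i m * p \<le> e * q i m" using a i b unfolding p_def by (intro mult_left_le) auto
      have "\<bar>e * q i m * p - e * q i m\<bar> = e * q i m * (1 - p)"
        using xp by (simp add: abs_of_nonpos algebra_simps)
      also have "\<dots> \<le> T * T" using a i b s aT[OF i(1)] T0 unfolding p_def
        by (intro mult_mono) auto
      finally show ?thesis using False by (simp add: Pe Qe p_def power2_eq_square)
    next
      case nf: False
      have Q0: "Qrate k q m m' = 0" unfolding Qrate_def by (simp only: if_not_P[OF False] if_not_P[OF nf])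
      have ne: "Hdiff m m' \<noteq> {}" using False by (auto simp: Hdiff_def)
      then obtain i where i: "i \<in> Hdiff m m'" by blast
      have "Hdiff m m' \<noteq> {i}"
      proof
        assume "Hdiff m m' = {i}"
        then have "m' = flip m i" unfolding Hdiff_def flip_def by auto
        moreover have "i < k" using i H by auto
        ultimately show False using nf by blast
      qed
      then obtain j where j: "j \<in> Hdiff m m'" "j \<noteq> i" using i by blast
      have fin: "finite (Hdiff m m')" using H finite_subset by blast
      let ?R = "Hdiff m m' - {i, j}"
      have split: "(\<Prod>l\<in>Hdiff m m'. e * q l m) = (e * q i m) * (e * q j m) * (\<Prod>l\<in>?R. e * q l m)"
      proof -
        have "(\<Prod>l\<in>Hdiff m m'. e * q l m) = e * q i m * (\<Prod>l\<in>Hdiff m m' - {i}. e * q l m)"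
          using fin i by (intro prod.remove) auto
        also have "(\<Prod>l\<in>Hdiff m m' - {i}. e * q l m) = e * q j m * (\<Prod>l\<in>Hdiff m m' - {i} - {j}. e * q l m)"
          using fin j by (intro prod.remove) auto
        also have "Hdiff m m' - {i} - {j} = ?R" by auto
        finally show ?thesis by (simp add: mult_ac)
      qed
      have R: "0 \<le> (\<Prod>l\<in>?R. e * q l m)" "(\<Prod>l\<in>?R. e * q l m) \<le> 1"
        using a H by (auto intro!: prod_nonneg prod_le_1)
      have C: "0 \<le> (\<Prod>l\<in>?K - Hdiff m m'. 1 - e * q l m)" "(\<Prod>l\<in>?K - Hdiff m m'. 1 - e * q l m) \<le> 1"
        using prod_one_minus_bounds[of "?K - Hdiff m m'" "\<lambda>l. e * q l m"] a by auto
      have ik: "i < k" "j < k" using i j H by auto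
      have "\<bar>Peps k q e m m'\<bar> \<le> (e * q i m) * (e * q j m)"
      proof -
        have "\<bar>Peps k q e m m'\<bar> = (e * q i m) * (e * q j m) * ((\<Prod>l\<in>?R. e * q l m) *
               (\<Prod>l\<in>?K - Hdiff m m'. 1 - e * q l m))"
        proof -
          have "Peps k q e m m' = (e * q i m) * (e * q j m) * ((\<Prod>l\<in>?R. e * q l m) *
               (\<Prod>l\<in>?K - Hdiff m m'. 1 - e * q l m))"
            unfolding Peps_def split by (simp add: mult_ac)
          moreover have "0 \<le> (e * q i m) * (e * q j m) * ((\<Prod>l\<in>?R. e * q l m) *
               (\<Prod>l\<in>?K - Hdiff m m'. 1 - e * q l m))"
            using a ik R C mult_nonneg_nonneg[OF mult_nonneg_nonneg[of "e * q i m" "e * q j m"]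
                mult_nonneg_nonneg[of "\<Prod>l\<in>?R. e * q l m"]] by auto
          ultimately show ?thesis by simp
        qed
        also have "\<dots> \<le> (e * q i m) * (e * q j m) * 1"
          using a ik R C by (intro mult_left_mono mult_le_one) auto
        finally show ?thesis by simp
      qed
      also have "\<dots> \<le> T * T" using aT ik a T0 by (intro mult_mono) auto
      finally show ?thesis using False Q0 by (simp add: power2_eq_square)
    qed
  qed
  then show ?thesis using T by simp
qed



lemma dirichlet:
  fixes Q :: "'a \<Rightarrow> 'a \<Rightarrow> real"
  assumes fin: "finite M" and row: "\<forall>a\<in>M. (\<Sum>b\<in>M. Q a b) = 0"
    and rev: "\<forall>a\<in>M. \<forall>b\<in>M. p a * Q a b = p b * Q b a"
  shows "(\<Sum>a\<in>M. \<Sum>b\<in>M. p a * Q a b * f a * f b)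
         = -(1/2) * (\<Sum>a\<in>M. \<Sum>b\<in>M. p a * Q a b * (f a - f b)^2)"
proof -
  have e: "(\<Sum>a\<in>M. \<Sum>b\<in>M. p a * Q a b * (f a - f b)^2)
     = (\<Sum>a\<in>M. \<Sum>b\<in>M. p a * Q a b * f a ^ 2) - 2 * (\<Sum>a\<in>M. \<Sum>b\<in>M. p a * Q a b * f a * f b)
       + (\<Sum>a\<in>M. \<Sum>b\<in>M. p a * Q a b * f b ^ 2)"
    by (simp add: power2_diff algebra_simps sum.distrib sum_subtractf sum_distrib_left)
  have 1: "(\<Sum>a\<in>M. \<Sum>b\<in>M. p a * Q a b * f a ^ 2) = 0"
  proof -
    have "(\<Sum>a\<in>M. \<Sum>b\<in>M. p a * Q a b * f a ^ 2) = (\<Sum>a\<in>M. p a * f a ^ 2 * (\<Sum>b\<in>M. Q a b))"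
      by (intro sum.cong refl) (simp add: sum_distrib_right sum_distrib_left mult_ac)
    also have "\<dots> = 0" using row by simp
    finally show ?thesis .
  qed
  have 3: "(\<Sum>a\<in>M. \<Sum>b\<in>M. p a * Q a b * f b ^ 2) = 0"
  proof -
    have "(\<Sum>a\<in>M. \<Sum>b\<in>M. p a * Q a b * f b ^ 2) = (\<Sum>a\<in>M. \<Sum>b\<in>M. p b * Q b a * f b ^ 2)"
      using rev by (intro sum.cong) auto
    also have "\<dots> = (\<Sum>b\<in>M. \<Sum>a\<in>M. p b * Q b a * f b ^ 2)" by (rule sum.swap)
    also have "\<dots> = 0" using 1 by simp
    finally show ?thesis .
  qed
  show ?thesis using e 1 3 by simp
qed

definition Dform :: "'a set \<Rightarrow> ('a \<Rightarrow> real) \<Rightarrow> ('a \<Rightarrow> 'a \<Rightarrow> real) \<Rightarrow> ('a \<Rightarrow> real) \<Rightarrow> real" where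
  "Dform M p Q f = (\<Sum>a\<in>M. \<Sum>b\<in>M. p a * Q a b * (f a - f b)^2)"

lemma Dform_term:
  assumes fin: "finite M" and pos: "\<forall>a\<in>M. p a > 0"
    and off: "\<forall>a\<in>M. \<forall>b\<in>M. a \<noteq> b \<longrightarrow> Q a b \<ge> 0"
    and ab: "a \<in> M" "b \<in> M"
  shows "p a * Q a b * (f a - f b)^2 \<le> Dform M p Q f" and "0 \<le> Dform M p Q f"
proof -
  have nn: "0 \<le> p x * Q x y * (f x - f y)^2" if "x \<in> M" "y \<in> M" for x y
  proof (cases "x = y")
    case False then show ?thesis using that pos off by (intro mult_nonneg_nonneg) (auto simp: less_imp_le)
  qed simp
  have "p a * Q a b * (f a - f b)^2 \<le> (\<Sum>b\<in>M. p a * Q a b * (f a - f b)^2)"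
    using ab fin nn by (intro member_le_sum) auto
  also have "\<dots> \<le> Dform M p Q f" unfolding Dform_def
    using ab fin nn by (intro member_le_sum sum_nonneg) auto
  finally show "p a * Q a b * (f a - f b)^2 \<le> Dform M p Q f" .
  show "0 \<le> Dform M p Q f" unfolding Dform_def using nn by (intro sum_nonneg) auto
qed

lemma path_bound:
  assumes fin: "finite M" and pos: "\<forall>a\<in>M. p a > 0"
    and off: "\<forall>a\<in>M. \<forall>b\<in>M. a \<noteq> b \<longrightarrow> Q a b \<ge> 0"
    and xy: "(x, y) \<in> {(a, b). a \<in> M \<and> b \<in> M \<and> a \<noteq> b \<and> Q a b > 0}\<^sup>*"
  shows "\<exists>C\<ge>0. \<forall>f. (f x - f y)^2 \<le> C * Dform M p Q f"
  using xy
proof (induction rule: rtrancl_induct)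
  case base
  then show ?case by (intro exI[of _ 0]) simp
next
  case (step y z)
  then obtain C where C: "C \<ge> 0" "\<forall>f. (f x - f y)^2 \<le> C * Dform M p Q f" by blast
  from step have yz: "y \<in> M" "z \<in> M" "Q y z > 0" by auto
  have pq: "p y * Q y z > 0" using yz pos by simp
  have b1: "(f y - f z)^2 \<le> (1 / (p y * Q y z)) * Dform M p Q f" for f
    using Dform_term(1)[OF fin pos off yz(1,2), of f] pq by (simp add: field_simps)
  have "(f x - f z)^2 \<le> (2 * C + 2 / (p y * Q y z)) * Dform M p Q f" for f
  proof -
    have "(f x - f z)^2 \<le> 2 * (f x - f y)^2 + 2 * (f y - f z)^2"
    proof -
      have "0 \<le> (f x - 2 * f y + f z)^2" by simp
      then show ?thesis by (simp add: power2_eq_square algebra_simps)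
    qed
    also have "\<dots> \<le> 2 * (C * Dform M p Q f) + 2 * ((1 / (p y * Q y z)) * Dform M p Q f)"
      using spec[OF C(2), of f] b1[of f] by simp
    finally show ?thesis by (simp add: algebra_simps)
  qed
  moreover have "0 \<le> 2 * C + 2 / (p y * Q y z)" using C pq by simp
  ultimately show ?case by blast
qed

lemma variance_identity:
  fixes p f :: "'a \<Rightarrow> real"
  shows "(\<Sum>x\<in>M. \<Sum>y\<in>M. p x * p y * (f x - f y)^2)
     = 2 * (\<Sum>x\<in>M. p x) * (\<Sum>x\<in>M. p x * f x ^ 2) - 2 * (\<Sum>x\<in>M. p x * f x)^2"
proof -
  have "(\<Sum>x\<in>M. \<Sum>y\<in>M. p x * p y * (f x - f y)^2)
     = (\<Sum>x\<in>M. \<Sum>y\<in>M. (p x * f x ^ 2) * p y) + (\<Sum>x\<in>M. \<Sum>y\<in>M. p x * (p y * f y ^ 2))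
       - 2 * (\<Sum>x\<in>M. \<Sum>y\<in>M. (p x * f x) * (p y * f y))"
    by (simp add: power2_diff algebra_simps sum.distrib sum_subtractf sum_distrib_left)
  also have "\<dots> = (\<Sum>x\<in>M. p x * f x ^ 2) * (\<Sum>x\<in>M. p x) + (\<Sum>x\<in>M. p x) * (\<Sum>x\<in>M. p x * f x ^ 2)
       - 2 * ((\<Sum>x\<in>M. p x * f x) * (\<Sum>x\<in>M. p x * f x))"
    by (simp only: sum_product)
  finally show ?thesis by (simp add: power2_eq_square algebra_simps)
qed

lemma poincare:
  fixes Q :: "'a \<Rightarrow> 'a \<Rightarrow> real"
  assumes fin: "finite M" and pos: "\<forall>a\<in>M. p a > 0"
    and off: "\<forall>a\<in>M. \<forall>b\<in>M. a \<noteq> b \<longrightarrow> Q a b \<ge> 0"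
    and sum1: "(\<Sum>a\<in>M. p a) = 1"
    and irr: "\<forall>x\<in>M. \<forall>y\<in>M. (x, y) \<in> {(a, b). a \<in> M \<and> b \<in> M \<and> a \<noteq> b \<and> Q a b > 0}\<^sup>*"
  shows "\<exists>C>0. \<forall>f. (\<Sum>a\<in>M. p a * f a) = 0 \<longrightarrow> (\<Sum>a\<in>M. p a * f a ^ 2) \<le> C * Dform M p Q f"
proof -
  have "\<forall>pr\<in>M \<times> M. \<exists>C\<ge>0. \<forall>f. (f (fst pr) - f (snd pr))^2 \<le> C * Dform M p Q f"
    using path_bound[OF fin pos off] irr by auto
  then obtain Cf where Cf: "\<forall>pr\<in>M \<times> M. Cf pr \<ge> 0 \<and> (\<forall>f. (f (fst pr) - f (snd pr))^2 \<le> Cf pr * Dform M p Q f)"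
    by (rule bchoice[THEN exE]) blast
  define C0 where "C0 = (\<Sum>pr\<in>M \<times> M. Cf pr)"
  have C0: "C0 \<ge> 0" unfolding C0_def using Cf by (intro sum_nonneg) auto
  have bnd: "(f x - f y)^2 \<le> C0 * Dform M p Q f" if "x \<in> M" "y \<in> M" for f x y
  proof -
    have D0: "0 \<le> Dform M p Q f" using Dform_term(2)[OF fin pos off that] .
    have "Cf (x, y) \<le> C0" unfolding C0_def using Cf that fin by (intro member_le_sum) auto
    then have "Cf (x, y) * Dform M p Q f \<le> C0 * Dform M p Q f" using D0 by (rule mult_right_mono)
    moreover have "(f x - f y)^2 \<le> Cf (x, y) * Dform M p Q f" using Cf that by force
    ultimately show ?thesis by linarith
  qed
  show ?thesis
  proof (intro exI[of _ "C0 / 2 + 1"] conjI allI impI)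
    show "0 < C0 / 2 + 1" using C0 by simp
    fix f assume f0: "(\<Sum>a\<in>M. p a * f a) = 0"
    have D0: "0 \<le> Dform M p Q f" 
    proof (cases "M = {}")
      case False then obtain a where "a \<in> M" by blast
      then show ?thesis using Dform_term(2)[OF fin pos off] by blast
    qed (simp add: Dform_def)
    have "2 * (\<Sum>a\<in>M. p a * f a ^ 2) = (\<Sum>x\<in>M. \<Sum>y\<in>M. p x * p y * (f x - f y)^2)"
      using variance_identity[of p f M] f0 sum1 by simp
    also have "\<dots> \<le> (\<Sum>x\<in>M. \<Sum>y\<in>M. p x * p y * (C0 * Dform M p Q f))"
      using bnd pos by (intro sum_mono mult_left_mono) (auto intro: less_imp_le)
    also have "\<dots> = (C0 * Dform M p Q f) * ((\<Sum>x\<in>M. p x) * (\<Sum>y\<in>M. p y))"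
      by (simp add: sum_product sum_distrib_left mult_ac)
    also have "\<dots> = C0 * Dform M p Q f" using sum1 by simp
    finally have "(\<Sum>a\<in>M. p a * f a ^ 2) \<le> C0 / 2 * Dform M p Q f" by simp
    also have "\<dots> \<le> (C0 / 2 + 1) * Dform M p Q f" using D0 by (simp add: algebra_simps)
    finally show "(\<Sum>a\<in>M. p a * f a ^ 2) \<le> (C0 / 2 + 1) * Dform M p Q f" .
  qed
qed



lemma recursion_to_zero:
  fixes V a b :: "nat \<Rightarrow> real"
  assumes V0: "\<forall>s. V s \<ge> 0"
    and ev: "eventually (\<lambda>s. 0 \<le> a (Suc s) \<and> a (Suc s) \<le> 1 \<and>
               V (Suc s) \<le> (1 - a (Suc s)) * V s + a (Suc s) * b (Suc s)) sequentially"
    and adiv: "filterlim (\<lambda>n. \<Sum>s=1..n. a s) at_top sequentially"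
    and b0: "b \<longlonglongrightarrow> 0"
  shows "V \<longlonglongrightarrow> 0"
proof (rule LIMSEQ_I)
  fix r :: real assume r: "0 < r"
  define d where "d = r / 2"
  have d: "0 < d" using r by (simp add: d_def)
  have "eventually (\<lambda>s. b (Suc s) < d) sequentially"
    using order_tendstoD(2)[OF b0 d] unfolding eventually_sequentially_Suc[of "\<lambda>s. b s < d"] .
  with ev have "eventually (\<lambda>s. (0 \<le> a (Suc s) \<and> a (Suc s) \<le> 1 \<and>
               V (Suc s) \<le> (1 - a (Suc s)) * V s + a (Suc s) * b (Suc s)) \<and> b (Suc s) < d) sequentially"
    by (rule eventually_conj)
  then obtain s0 where s0: "\<And>s. s \<ge> s0 \<Longrightarrow> 0 \<le> a (Suc s) \<and> a (Suc s) \<le> 1 \<and>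
               V (Suc s) \<le> (1 - a (Suc s)) * V s + a (Suc s) * b (Suc s) \<and> b (Suc s) < d"
    unfolding eventually_sequentially by blast
  define A where "A n = (\<Sum>s=1..n. a s)" for n
  define W where "W n = max (V n - d) 0" for n
  have W0: "W n \<ge> 0" for n by (simp add: W_def)
  have Wb: "W n \<le> W s0 * exp (- (A n - A s0))" if "n \<ge> s0" for n
    using that
  proof (induction n rule: dec_induct)
    case base
    then show ?case by simp
  next
    case (step n)
    from s0[OF step(1)] have h: "0 \<le> a (Suc n)" "a (Suc n) \<le> 1"
      "V (Suc n) \<le> (1 - a (Suc n)) * V n + a (Suc n) * b (Suc n)" "b (Suc n) < d" by auto
    have "a (Suc n) * b (Suc n) \<le> a (Suc n) * d" using h by (intro mult_left_mono) auto
    then have "V (Suc n) - d \<le> (1 - a (Suc n)) * (V n - d)" using h(3) by (simp add: algebra_simps)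
    also have "\<dots> \<le> (1 - a (Suc n)) * W n" using h by (intro mult_left_mono) (auto simp: W_def)
    finally have "W (Suc n) \<le> (1 - a (Suc n)) * W n"
      using h W0[of n] unfolding W_def[of "Suc n"] by auto
    also have "\<dots> \<le> exp (- a (Suc n)) * W n"
      using W0[of n] by (intro mult_right_mono) (auto simp: add.commute[of 1] exp_ge_add_one_self[of "- a (Suc n)", simplified])
    also have "\<dots> \<le> exp (- a (Suc n)) * (W s0 * exp (- (A n - A s0)))"
      using step(3) by (intro mult_left_mono) auto
    also have "\<dots> = W s0 * exp (- (A (Suc n) - A s0))"
      by (simp add: A_def algebra_simps exp_add[symmetric])
    finally show ?case .
  qed
  have "filterlim (\<lambda>n. - A s0 + A n) at_top sequentially"
    using filterlim_tendsto_add_at_top[OF tendsto_const adiv] unfolding A_def .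
  then have "filterlim (\<lambda>n. - (A n - A s0)) at_bot sequentially"
    by (simp add: filterlim_uminus_at_bot algebra_simps)
  then have "(\<lambda>n. exp (- (A n - A s0))) \<longlonglongrightarrow> 0"
    using exp_at_bot filterlim_compose by blast
  then have "(\<lambda>n. W s0 * exp (- (A n - A s0))) \<longlonglongrightarrow> 0"
    using tendsto_mult_right_zero by blast
  then have "eventually (\<lambda>n. W s0 * exp (- (A n - A s0)) < d) sequentially"
    using d by (rule order_tendstoD)
  then obtain N where N: "\<And>n. n \<ge> N \<Longrightarrow> W s0 * exp (- (A n - A s0)) < d"
    unfolding eventually_sequentially by blast
  show "\<exists>no. \<forall>n\<ge>no. norm (V n - 0) < r"
  proof (intro exI allI impI)
    fix n assume "max N s0 \<le> n"
    then have "W n < d" using Wb[of n] N[of n] by auto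
    then show "norm (V n - 0) < r" using V0[rule_format, of n] by (auto simp: W_def d_def max_def split: if_splits)
  qed
qed



lemma norm_bound:
  assumes N: "is_norm_on k N" and w: "w \<in> vecs k"
  shows "N w \<le> (\<Sum>m\<in>models k. \<bar>w m\<bar> * N (\<lambda>x. if x = m then 1 else 0))"
proof -
  let ?e = "\<lambda>m x. if x = m then (1::real) else 0"
  have fin: "finite (models k)" by (simp add: models_def)
  have N0: "\<forall>v\<in>vecs k. N v \<ge> 0 \<and> (N v = 0 \<longleftrightarrow> v = (\<lambda>_. 0))"
    and Ns: "\<forall>v\<in>vecs k. \<forall>c. N (\<lambda>m. c * v m) = \<bar>c\<bar> * N v"
    and Nt: "\<forall>v\<in>vecs k. \<forall>w\<in>vecs k. N (\<lambda>m. v m + w m) \<le> N v + N w"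
    using N unfolding is_norm_on_def by blast+
  have main: "A \<subseteq> models k \<Longrightarrow> N (\<lambda>x. \<Sum>m\<in>A. w m * ?e m x) \<le> (\<Sum>m\<in>A. \<bar>w m\<bar> * N (?e m))"
    for A
  proof (induction A rule: infinite_finite_induct)
    case (infinite A)
    then show ?case using finite_subset[OF _ fin] by blast
  next
    case empty
    have "(\<lambda>_. 0::real) \<in> vecs k" by (simp add: vecs_def)
    then show ?case using N0 by force
  next
    case (insert a F)
    have a: "a \<in> models k" and F: "F \<subseteq> models k" using insert by auto
    have ea: "?e a \<in> vecs k" using a by (auto simp: vecs_def)
    have eF: "(\<lambda>x. \<Sum>m\<in>F. w m * ?e m x) \<in> vecs k" using F unfolding vecs_def by (auto intro!: sum.neutral)
    have eaw: "(\<lambda>x. w a * ?e a x) \<in> vecs k" using a by (auto simp: vecs_def)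
    have "N (\<lambda>x. \<Sum>m\<in>insert a F. w m * ?e m x) = N (\<lambda>x. w a * ?e a x + (\<Sum>m\<in>F. w m * ?e m x))"
      using insert by simp
    also have "\<dots> \<le> N (\<lambda>x. w a * ?e a x) + N (\<lambda>x. \<Sum>m\<in>F. w m * ?e m x)"
      using Nt[rule_format, OF eaw eF] by simp
    also have "N (\<lambda>x. w a * ?e a x) = \<bar>w a\<bar> * N (?e a)" using Ns[rule_format, OF ea, of "w a"] by simp
    also have "N (\<lambda>x. \<Sum>m\<in>F. w m * ?e m x) \<le> (\<Sum>m\<in>F. \<bar>w m\<bar> * N (?e m))" using insert F by blast
    finally show ?case using insert by simp
  qed
  have "w = (\<lambda>x. \<Sum>m\<in>models k. w m * ?e m x)"
  proof
    fix x show "w x = (\<Sum>m\<in>models k. w m * ?e m x)"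
      using w fin by (cases "x \<in> models k") (auto simp: vecs_def if_distrib cong: if_cong)
  qed
  then show ?thesis using main[of "models k"] by simp
qed



lemma pw_ineq:
  fixes x y z w e Y Z Pi :: real
  assumes "0 \<le> w" "w \<le> Pi" "\<bar>y\<bar> \<le> Y" "\<bar>z\<bar> \<le> Z"
  shows "(x + e*y + z)^2 * w \<le> x^2 * w + 2*e*x*y*w + Pi * (2*e^2*Y^2 + 2*Z^2 + 2*\<bar>x\<bar>*Z)"
proof -
  have Y0: "0 \<le> Y" "0 \<le> Z" using assms by auto
  have y2: "y^2 \<le> Y^2" using power_mono[OF assms(3) abs_ge_zero, of 2] by simp
  have z2: "z^2 \<le> Z^2" using power_mono[OF assms(4) abs_ge_zero, of 2] by simp
  have "(e*y + z)^2 \<le> 2*(e*y)^2 + 2*z^2"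
  proof -
    have "0 \<le> (e*y - z)^2" by simp
    then show ?thesis by (simp add: power2_eq_square algebra_simps)
  qed
  also have "\<dots> \<le> 2*e^2*Y^2 + 2*Z^2"
  proof -
    have "e^2*y^2 \<le> e^2*Y^2" by (rule mult_left_mono[OF y2]) simp
    then show ?thesis using z2 by (simp add: power_mult_distrib)
  qed
  finally have a: "(e*y + z)^2 \<le> 2*e^2*Y^2 + 2*Z^2" .
  have b: "2*x*z \<le> 2*\<bar>x\<bar>*Z"
  proof -
    have "x*z \<le> \<bar>x\<bar>*\<bar>z\<bar>" by (metis abs_ge_self abs_mult)
    also have "\<dots> \<le> \<bar>x\<bar>*Z" using assms(4) by (intro mult_left_mono) auto
    finally show ?thesis by simp
  qed
  define R where "R = 2*e^2*Y^2 + 2*Z^2 + 2*\<bar>x\<bar>*Z"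
  have R0: "0 \<le> R" unfolding R_def using Y0 by simp
  have "(x + e*y + z)^2 = x^2 + 2*e*x*y + (e*y + z)^2 + 2*x*z"
    by (simp add: power2_eq_square algebra_simps)
  also have "\<dots> \<le> x^2 + 2*e*x*y + R" using a b unfolding R_def by simp
  finally have c: "(x + e*y + z)^2 \<le> x^2 + 2*e*x*y + R" .
  have "(x + e*y + z)^2 * w \<le> (x^2 + 2*e*x*y + R) * w" using c assms(1) by (rule mult_right_mono)
  also have "\<dots> = x^2 * w + 2*e*x*y*w + R * w" by (simp add: algebra_simps)
  also have "R * w \<le> R * Pi" using R0 assms(2) by (simp add: mult_left_mono)
  finally show ?thesis unfolding R_def by (simp add: mult.commute)
qed

lemma step_ineq:
  fixes v v' u r p :: "'a \<Rightarrow> real"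
  assumes fin: "finite M" and pos: "\<forall>m\<in>M. p m > 0" and pinv: "\<forall>m\<in>M. 1 / p m \<le> Pq"
    and Pi0: "0 \<le> Pq"
    and dec: "\<forall>m\<in>M. v' m = v m + e * u m + r m"
    and ub: "\<forall>m\<in>M. \<bar>u m\<bar> \<le> Qb * S" and rb: "\<forall>m\<in>M. \<bar>r m\<bar> \<le> e^2 * K * (S + 1)"
    and Sdef: "S = (\<Sum>m\<in>M. \<bar>v m\<bar>)"
    and Dir: "(\<Sum>m\<in>M. v m * u m / p m) = -(1/2) * D"
    and Poin: "(\<Sum>m\<in>M. v m ^ 2 / p m) \<le> CP * D" and CP: "CP > 0"
    and e: "0 \<le> e" "e \<le> 1" and K: "K \<ge> 0" and Qb: "Qb \<ge> 0"
    and Sn: "S^2 \<le> real (card M) * (\<Sum>m\<in>M. v m ^ 2 / p m)"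
  shows "(\<Sum>m\<in>M. v' m ^ 2 / p m) \<le> (1 - e / CP + e^2 * (Pq * (2 * real (card M) * Qb^2
            + 4 * real (card M) * K^2 + 4 * K) * real (card M))) * (\<Sum>m\<in>M. v m ^ 2 / p m)
          + e^2 * (Pq * (4 * real (card M) * K^2 + 2 * K))"
proof -
  define n where "n = real (card M)"
  define V where "V = (\<Sum>m\<in>M. v m ^ 2 / p m)"
  have S0: "0 \<le> S" unfolding Sdef by (simp add: sum_nonneg)
  have n0: "0 \<le> n" unfolding n_def by simp
  have V0: "0 \<le> V" unfolding V_def using pos by (intro sum_nonneg) auto
  have pw: "v' m ^ 2 / p m \<le> v m ^ 2 * (1 / p m) + 2 * e * v m * u m * (1 / p m)
      + Pq * (2 * e^2 * (Qb * S)^2 + 2 * (e^2 * K * (S + 1))^2 + 2 * \<bar>v m\<bar> * (e^2 * K * (S + 1)))"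
    if m: "m \<in> M" for m
  proof -
    have "0 \<le> 1 / p m" using m pos by auto
    from pw_ineq[OF this, of Pq "u m" "Qb * S" "r m" "e^2 * K * (S + 1)" "v m" e] m pinv ub rb
    have "(v m + e * u m + r m)^2 * (1 / p m) \<le> v m ^ 2 * (1 / p m) + 2 * e * v m * u m * (1 / p m)
      + Pq * (2 * e^2 * (Qb * S)^2 + 2 * (e^2 * K * (S + 1))^2 + 2 * \<bar>v m\<bar> * (e^2 * K * (S + 1)))"
      by blast
    then show ?thesis using dec m by simp
  qed
  have "(\<Sum>m\<in>M. v' m ^ 2 / p m) \<le> (\<Sum>m\<in>M. v m ^ 2 * (1 / p m) + 2 * e * v m * u m * (1 / p m)
      + Pq * (2 * e^2 * (Qb * S)^2 + 2 * (e^2 * K * (S + 1))^2 + 2 * \<bar>v m\<bar> * (e^2 * K * (S + 1))))"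
    using pw by (rule sum_mono)
  also have "\<dots> = V + 2 * e * (\<Sum>m\<in>M. v m * u m / p m)
      + Pq * (n * (2 * e^2 * (Qb * S)^2 + 2 * (e^2 * K * (S + 1))^2) + 2 * S * (e^2 * K * (S + 1)))"
    unfolding V_def n_def Sdef
    by (simp add: sum.distrib sum_distrib_left sum_distrib_right algebra_simps)
  also have "\<dots> = V - e * D
      + Pq * (n * (2 * e^2 * (Qb * S)^2 + 2 * (e^2 * K * (S + 1))^2) + 2 * S * (e^2 * K * (S + 1)))"
    using Dir by simp
  also have "\<dots> \<le> V - e / CP * V + e^2 * (Pq * ((2 * n * Qb^2 + 4 * n * K^2 + 4 * K) * S^2 + (4 * n * K^2 + 2 * K)))"
  proof -
    have D1: "e / CP * V \<le> e * D"
    proof -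
      have "V / CP \<le> D" using Poin CP unfolding V_def by (simp add: field_simps mult.commute)
      then have "e * (V / CP) \<le> e * D" using e by (intro mult_left_mono) auto
      then show ?thesis by simp
    qed
    have e4: "e^4 \<le> e^2" using e by (simp add: power_decreasing)
    have in1: "(e^2 * K * (S + 1))^2 \<le> e^2 * (K^2 * (2 * S^2 + 2))"
    proof -
      have "(e^2 * K * (S + 1))^2 = e^4 * (K^2 * (S + 1)^2)" by (simp add: power_mult_distrib)
      also have "\<dots> \<le> e^2 * (K^2 * (S + 1)^2)" using e4 by (intro mult_right_mono) auto
      also have "(S + 1)^2 \<le> 2 * S^2 + 2"
      proof -
        have "0 \<le> (S - 1)^2" by simp
        then show ?thesis by (simp add: power2_eq_square algebra_simps)
      qed
      then have "e^2 * (K^2 * (S + 1)^2) \<le> e^2 * (K^2 * (2 * S^2 + 2))"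
        by (intro mult_left_mono) auto
      finally show ?thesis .
    qed
    have in2: "S * (e^2 * K * (S + 1)) \<le> e^2 * (K * (2 * S^2 + 1))"
    proof -
      have "S * (S + 1) \<le> 2 * S^2 + 1"
      proof -
        have "0 \<le> (S - 1)^2" by simp
        then show ?thesis using S0 by (simp add: power2_eq_square algebra_simps)
      qed
      then have "e^2 * K * (S * (S + 1)) \<le> e^2 * K * (2 * S^2 + 1)"
        using K by (intro mult_left_mono) auto
      then show ?thesis by (simp add: algebra_simps)
    qed
    have "n * (2 * e^2 * (Qb * S)^2 + 2 * (e^2 * K * (S + 1))^2) + 2 * S * (e^2 * K * (S + 1))
        \<le> n * (2 * e^2 * (Qb * S)^2 + 2 * (e^2 * (K^2 * (2 * S^2 + 2)))) + 2 * (e^2 * (K * (2 * S^2 + 1)))"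
      using in1 in2 n0 by (intro add_mono mult_left_mono) auto
    also have "\<dots> = e^2 * ((2 * n * Qb^2 + 4 * n * K^2 + 4 * K) * S^2 + (4 * n * K^2 + 2 * K))"
      by (simp add: power2_eq_square algebra_simps)
    finally have "Pq * (n * (2 * e^2 * (Qb * S)^2 + 2 * (e^2 * K * (S + 1))^2) + 2 * S * (e^2 * K * (S + 1)))
        \<le> Pq * (e^2 * ((2 * n * Qb^2 + 4 * n * K^2 + 4 * K) * S^2 + (4 * n * K^2 + 2 * K)))"
      using Pi0 by (intro mult_left_mono) auto
    then show ?thesis using D1 by (simp add: algebra_simps)
  qed
  also have "\<dots> \<le> V - e / CP * V + e^2 * (Pq * ((2 * n * Qb^2 + 4 * n * K^2 + 4 * K) * (n * V) + (4 * n * K^2 + 2 * K)))"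
  proof -
    have "(2 * n * Qb^2 + 4 * n * K^2 + 4 * K) * S^2 \<le> (2 * n * Qb^2 + 4 * n * K^2 + 4 * K) * (n * V)"
      using Sn n0 K unfolding n_def V_def by (intro mult_left_mono) auto
    then have "Pq * ((2 * n * Qb^2 + 4 * n * K^2 + 4 * K) * S^2 + (4 * n * K^2 + 2 * K))
       \<le> Pq * ((2 * n * Qb^2 + 4 * n * K^2 + 4 * K) * (n * V) + (4 * n * K^2 + 2 * K))"
      using Pi0 by (intro mult_left_mono) auto
    then have "e^2 * (Pq * ((2 * n * Qb^2 + 4 * n * K^2 + 4 * K) * S^2 + (4 * n * K^2 + 2 * K)))
       \<le> e^2 * (Pq * ((2 * n * Qb^2 + 4 * n * K^2 + 4 * K) * (n * V) + (4 * n * K^2 + 2 * K)))"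
      by (rule mult_left_mono) simp
    then show ?thesis by linarith
  qed
  also have "\<dots> = (1 - e / CP + e^2 * (Pq * (2 * n * Qb^2 + 4 * n * K^2 + 4 * K) * n)) * V
          + e^2 * (Pq * (4 * n * K^2 + 2 * K))"
    by (simp add: algebra_simps)
  finally show ?thesis unfolding n_def V_def .
qed



theorem theorem3p2:
  fixes k :: nat and q :: "nat \<Rightarrow> nat set \<Rightarrow> real" and pi :: "nat set \<Rightarrow> real"
    and eps :: "nat \<Rightarrow> real" and mu0 :: "nat set \<Rightarrow> real"
    and N :: "(nat set \<Rightarrow> real) \<Rightarrow> real"
  assumes q_nonneg: "\<forall>i<k. \<forall>m\<in>models k. q i m \<ge> 0"
    and irred: "irreducible_Q k (Qrate k q)"
    and pi_dist: "is_distribution k pi"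
    and pi_stat: "stationary_Q k (Qrate k q) pi"
    and pi_pos: "\<forall>m\<in>models k. pi m > 0"
    and rev: "reversible_Q k (Qrate k q) pi"
    and eps_pos: "\<forall>s\<ge>1. eps s > 0"
    and eps_le: "\<forall>s\<ge>1. \<forall>i<k. \<forall>m\<in>models k. eps s * q i m \<le> 1"
    and eps_lim: "eps \<longlonglongrightarrow> 0"
    and eps_div: "filterlim (\<lambda>n. \<Sum>s=1..n. eps s) at_top sequentially"
    and mu0_dist: "is_distribution k mu0"
    and N_norm: "is_norm_on k N"
  shows "(\<lambda>s. N (\<lambda>m. if m \<in> models k then mu_seq k q eps mu0 s m - pi m else 0))
           \<longlonglongrightarrow> 0"
proof -
  define M where "M = models k"
  define Q where "Q = Qrate k q"
  have fin: "finite M" unfolding M_def by (rule models_finite)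
  have piM: "\<forall>m\<in>M. pi m > 0" using pi_pos unfolding M_def .
  have sum1: "(\<Sum>m\<in>M. pi m) = 1" using pi_dist unfolding is_distribution_def M_def by blast
  have pi_le1: "pi m \<le> 1" if "m \<in> M" for m
    using sum1 member_le_sum[of m M pi] that fin piM by (auto intro: less_imp_le)
  have off: "\<forall>a\<in>M. \<forall>b\<in>M. a \<noteq> b \<longrightarrow> Q a b \<ge> 0"
  proof (intro ballI impI)
    fix a b assume ab: "a \<in> M" "b \<in> M" "a \<noteq> b"
    show "Q a b \<ge> 0"
    proof (cases "\<exists>i<k. b = flip a i")
      case True
      then obtain i where "i < k" "b = flip a i" by blast
      then show ?thesis using Qrate_flip[of i k q a] q_nonneg ab unfolding Q_def M_def by auto
    next
      case False
      then have "Q a b = 0" unfolding Q_def Qrate_def by (simp only: if_not_P[OF ab(3)] if_not_P[OF False] if_False)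
      then show ?thesis by simp
    qed
  qed
  have revM: "\<forall>a\<in>M. \<forall>b\<in>M. pi a * Q a b = pi b * Q b a"
    using rev unfolding reversible_Q_def M_def Q_def by blast
  have statM: "\<forall>b\<in>M. (\<Sum>a\<in>M. pi a * Q a b) = 0"
    using pi_stat unfolding stationary_Q_def M_def Q_def by blast
  have row: "\<forall>a\<in>M. (\<Sum>b\<in>M. Q a b) = 0"
  proof
    fix a assume a: "a \<in> M"
    have "pi a * (\<Sum>b\<in>M. Q a b) = (\<Sum>b\<in>M. pi b * Q b a)"
      using revM a by (simp add: sum_distrib_left)
    also have "\<dots> = 0" using statM a by blast
    finally show "(\<Sum>b\<in>M. Q a b) = 0" using piM a by force
  qed
  have irr: "\<forall>x\<in>M. \<forall>y\<in>M. (x, y) \<in> {(a, b). a \<in> M \<and> b \<in> M \<and> a \<noteq> b \<and> Q a b > 0}\<^sup>*"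
    using irred unfolding irreducible_Q_def M_def Q_def .
  obtain CP where CP: "CP > 0"
    and Poin: "\<And>f. (\<Sum>a\<in>M. pi a * f a) = 0 \<Longrightarrow> (\<Sum>a\<in>M. pi a * f a ^ 2) \<le> CP * Dform M pi Q f"
    using poincare[OF fin piM off sum1 irr] by blast
  define mu where "mu = mu_seq k q eps mu0"
  define v where "v s m = mu s m - pi m" for s m
  define V where "V s = (\<Sum>m\<in>M. v s m ^ 2 / pi m)" for s
  have V0: "V s \<ge> 0" for s unfolding V_def using piM by (intro sum_nonneg) auto
  have mu_Suc: "mu (Suc s) m' = (\<Sum>m\<in>M. mu s m * Peps k q (eps (Suc s)) m m')" for s m'
    unfolding mu_def M_def by simp
  have musum: "(\<Sum>m\<in>M. mu s m) = 1" for s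
  proof (induction s)
    case 0
    then show ?case using mu0_dist unfolding mu_def M_def is_distribution_def by simp
  next
    case (Suc s)
    have "(\<Sum>m'\<in>M. mu (Suc s) m') = (\<Sum>m\<in>M. mu s m * (\<Sum>m'\<in>M. Peps k q (eps (Suc s)) m m'))"
    proof -
      have "(\<Sum>m'\<in>M. mu (Suc s) m') = (\<Sum>m'\<in>M. \<Sum>m\<in>M. mu s m * Peps k q (eps (Suc s)) m m')"
        unfolding mu_Suc ..
      also have "\<dots> = (\<Sum>m\<in>M. \<Sum>m'\<in>M. mu s m * Peps k q (eps (Suc s)) m m')" by (rule sum.swap)
      also have "\<dots> = (\<Sum>m\<in>M. mu s m * (\<Sum>m'\<in>M. Peps k q (eps (Suc s)) m m'))"
        by (simp add: sum_distrib_left)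
      finally show ?thesis .
    qed
    also have "\<dots> = (\<Sum>m\<in>M. mu s m)" using Peps_rowsum unfolding M_def by simp
    finally show ?case using Suc by simp
  qed
  have vsum: "(\<Sum>m\<in>M. v s m) = 0" for s
    using musum[of s] sum1 unfolding v_def by (simp add: sum_subtractf)
  define K where "K = (\<Sum>m\<in>M. (\<Sum>i<k. q i m)^2)"
  have K0: "K \<ge> 0" unfolding K_def by (simp add: sum_nonneg)
  define E where "E s m m' = Peps k q (eps (Suc s)) m m' - (if m = m' then 1 else 0)
      - eps (Suc s) * Q m m'" for s m m'
  have Ebound: "\<bar>E s m m'\<bar> \<le> eps (Suc s) ^ 2 * K" if mm: "m \<in> M" "m' \<in> M" for s m m'
  proof -
    have ep: "eps (Suc s) > 0" using eps_pos by simp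
    have a: "\<forall>i<k. 0 \<le> eps (Suc s) * q i m \<and> eps (Suc s) * q i m \<le> 1"
      using ep q_nonneg eps_le mm unfolding M_def by (auto intro: less_imp_le)
    have "\<bar>E s m m'\<bar> \<le> (eps (Suc s) * (\<Sum>i<k. q i m))^2"
      using Peps_expand[of m k m' "eps (Suc s)" q] mm a unfolding E_def M_def Q_def by blast
    also have "\<dots> = eps (Suc s) ^ 2 * (\<Sum>i<k. q i m)^2" by (simp add: power_mult_distrib)
    also have "\<dots> \<le> eps (Suc s) ^ 2 * K" unfolding K_def
      using mm fin by (intro mult_left_mono member_le_sum) auto
    finally show ?thesis .
  qed
  define Qb where "Qb = (\<Sum>a\<in>M. \<Sum>b\<in>M. \<bar>Q a b\<bar>)"
  have Qb0: "Qb \<ge> 0" unfolding Qb_def by (simp add: sum_nonneg)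
  have Qbb: "\<bar>Q a b\<bar> \<le> Qb" if "a \<in> M" "b \<in> M" for a b
  proof -
    have "\<bar>Q a b\<bar> \<le> (\<Sum>b\<in>M. \<bar>Q a b\<bar>)" using that fin by (intro member_le_sum) auto
    also have "\<dots> \<le> Qb" unfolding Qb_def using that fin by (intro member_le_sum sum_nonneg) auto
    finally show ?thesis .
  qed
  define PI where "PI = (\<Sum>m\<in>M. 1 / pi m)"
  have PI0: "PI \<ge> 0" unfolding PI_def using piM by (intro sum_nonneg) auto
  have PIb: "\<forall>m\<in>M. 1 / pi m \<le> PI"
  proof
    fix m assume m: "m \<in> M"
    have "\<forall>x\<in>M. 0 \<le> 1 / pi x" using piM by (auto simp: less_imp_le)
    then show "1 / pi m \<le> PI" unfolding PI_def using m fin by (intro member_le_sum) auto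
  qed
  define n where "n = real (card M)"
  define A1 where "A1 = PI * (2 * n * Qb^2 + 4 * n * K^2 + 4 * K) * n"
  define B1 where "B1 = PI * (4 * n * K^2 + 2 * K)"
  have A10: "A1 \<ge> 0" unfolding A1_def n_def using PI0 K0 by simp
  have step: "V (Suc s) \<le> (1 - eps (Suc s) / CP + eps (Suc s)^2 * A1) * V s + eps (Suc s)^2 * B1"
    if e1: "eps (Suc s) \<le> 1" for s
  proof -
    define e where "e = eps (Suc s)"
    have e0: "0 \<le> e" using eps_pos unfolding e_def by (auto intro: less_imp_le)
    define u where "u m' = (\<Sum>m\<in>M. v s m * Q m m')" for m'
    define r where "r m' = (\<Sum>m\<in>M. mu s m * E s m m')" for m'
    define S where "S = (\<Sum>m\<in>M. \<bar>v s m\<bar>)"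
    define f where "f m = v s m / pi m" for m
    have dec: "\<forall>m'\<in>M. v (Suc s) m' = v s m' + e * u m' + r m'"
    proof
      fix m' assume m': "m' \<in> M"
      have "mu (Suc s) m' = (\<Sum>m\<in>M. mu s m * ((if m = m' then 1 else 0) + e * Q m m' + E s m m'))"
        unfolding mu_Suc E_def e_def by simp
      also have "\<dots> = (\<Sum>m\<in>M. mu s m * (if m = m' then 1 else 0)) + e * (\<Sum>m\<in>M. mu s m * Q m m') + r m'"
        unfolding r_def by (simp add: algebra_simps sum.distrib sum_distrib_left)
      also have "(\<Sum>m\<in>M. mu s m * (if m = m' then 1 else 0)) = mu s m'"
        using m' fin by (simp add: if_distrib cong: if_cong)
      also have "(\<Sum>m\<in>M. mu s m * Q m m') = u m' + (\<Sum>m\<in>M. pi m * Q m m')"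
      proof -
        have "(\<Sum>m\<in>M. mu s m * Q m m') = (\<Sum>m\<in>M. v s m * Q m m' + pi m * Q m m')"
          by (intro sum.cong refl) (simp add: v_def algebra_simps)
        then show ?thesis unfolding u_def by (simp add: sum.distrib)
      qed
      also have "(\<Sum>m\<in>M. pi m * Q m m') = 0" using statM m' by blast
      finally show "v (Suc s) m' = v s m' + e * u m' + r m'" unfolding v_def by simp
    qed
    have ub: "\<forall>m'\<in>M. \<bar>u m'\<bar> \<le> Qb * S"
    proof
      fix m' assume m': "m' \<in> M"
      have "\<bar>u m'\<bar> \<le> (\<Sum>m\<in>M. \<bar>v s m * Q m m'\<bar>)" unfolding u_def by (rule sum_abs)
      also have "\<dots> \<le> (\<Sum>m\<in>M. \<bar>v s m\<bar> * Qb)"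
        using Qbb m' by (intro sum_mono) (auto simp: abs_mult intro: mult_left_mono)
      also have "\<dots> = Qb * S" unfolding S_def by (simp add: sum_distrib_left mult.commute)
      finally show "\<bar>u m'\<bar> \<le> Qb * S" .
    qed
    have rb: "\<forall>m'\<in>M. \<bar>r m'\<bar> \<le> e^2 * K * (S + 1)"
    proof
      fix m' assume m': "m' \<in> M"
      have "\<bar>r m'\<bar> \<le> (\<Sum>m\<in>M. \<bar>mu s m * E s m m'\<bar>)" unfolding r_def by (rule sum_abs)
      also have "\<dots> \<le> (\<Sum>m\<in>M. \<bar>mu s m\<bar> * (e^2 * K))"
        using Ebound m' unfolding e_def by (intro sum_mono) (auto simp: abs_mult intro: mult_left_mono)
      also have "\<dots> = e^2 * K * (\<Sum>m\<in>M. \<bar>mu s m\<bar>)" by (simp add: sum_distrib_left mult.commute)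
      also have "(\<Sum>m\<in>M. \<bar>mu s m\<bar>) \<le> S + 1"
      proof -
        have "(\<Sum>m\<in>M. \<bar>mu s m\<bar>) \<le> (\<Sum>m\<in>M. \<bar>v s m\<bar> + pi m)"
          using piM unfolding v_def by (intro sum_mono) auto
        also have "\<dots> = S + 1" unfolding S_def using sum1 by (simp add: sum.distrib)
        finally show ?thesis .
      qed
      then have "e^2 * K * (\<Sum>m\<in>M. \<bar>mu s m\<bar>) \<le> e^2 * K * (S + 1)"
        using K0 by (intro mult_left_mono) auto
      finally show "\<bar>r m'\<bar> \<le> e^2 * K * (S + 1)" .
    qed
    have vf: "v s m = pi m * f m" if "m \<in> M" for m using piM that unfolding f_def by force
    have Dir: "(\<Sum>m\<in>M. v s m * u m / pi m) = -(1/2) * Dform M pi Q f"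
    proof -
      have "(\<Sum>m'\<in>M. v s m' * u m' / pi m') = (\<Sum>m'\<in>M. \<Sum>m\<in>M. pi m * Q m m' * f m * f m')"
      proof (intro sum.cong refl)
        fix m' assume m': "m' \<in> M"
        have uu: "u m' = (\<Sum>m\<in>M. pi m * f m * Q m m')" unfolding u_def using vf by (intro sum.cong) auto
        have "v s m' * u m' / pi m' = f m' * u m'" by (simp add: f_def)
        also have "\<dots> = f m' * (\<Sum>m\<in>M. pi m * f m * Q m m')" by (simp only: uu)
        also have "f m' * (\<Sum>m\<in>M. pi m * f m * Q m m') = (\<Sum>m\<in>M. pi m * Q m m' * f m * f m')"
          by (simp add: sum_distrib_left mult_ac)
        finally show "v s m' * u m' / pi m' = (\<Sum>m\<in>M. pi m * Q m m' * f m * f m')" .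
      qed
      also have "\<dots> = (\<Sum>m\<in>M. \<Sum>m'\<in>M. pi m * Q m m' * f m * f m')" by (rule sum.swap)
      also have "\<dots> = -(1/2) * Dform M pi Q f" unfolding Dform_def by (rule dirichlet[OF fin row revM])
      finally show ?thesis .
    qed
    have Vf: "(\<Sum>m\<in>M. v s m ^ 2 / pi m) = (\<Sum>m\<in>M. pi m * f m ^ 2)"
      using piM by (intro sum.cong refl) (auto simp: f_def power2_eq_square)
    have Pn: "(\<Sum>m\<in>M. v s m ^ 2 / pi m) \<le> CP * Dform M pi Q f"
    proof -
      have "(\<Sum>a\<in>M. pi a * f a) = (\<Sum>a\<in>M. v s a)" using vf by (intro sum.cong refl) auto
      then have "(\<Sum>a\<in>M. pi a * f a) = 0" using vsum[of s] by simp
      then show ?thesis using Poin Vf by simp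
    qed
    have Sn: "S^2 \<le> real (card M) * (\<Sum>m\<in>M. v s m ^ 2 / pi m)"
    proof -
      have "S^2 \<le> (\<Sum>m\<in>M. \<bar>v s m\<bar>^2) * real (card M)"
        unfolding S_def by (rule sum_squared_le_sum_of_squares)
      also have "(\<Sum>m\<in>M. \<bar>v s m\<bar>^2) \<le> (\<Sum>m\<in>M. v s m ^ 2 / pi m)"
      proof (intro sum_mono)
        fix m assume m: "m \<in> M"
        have "v s m ^ 2 * pi m \<le> v s m ^ 2 * 1" using pi_le1[OF m] by (intro mult_left_mono) auto
        then show "\<bar>v s m\<bar>^2 \<le> v s m ^ 2 / pi m" using piM m by (simp add: field_simps)
      qed
      then have "(\<Sum>m\<in>M. \<bar>v s m\<bar>^2) * real (card M) \<le> (\<Sum>m\<in>M. v s m ^ 2 / pi m) * real (card M)"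
        by (intro mult_right_mono) auto
      finally show ?thesis by (simp add: mult.commute)
    qed
    have "V (Suc s) \<le> (1 - e / CP + e^2 * (PI * (2 * real (card M) * Qb^2
            + 4 * real (card M) * K^2 + 4 * K) * real (card M))) * V s
          + e^2 * (PI * (4 * real (card M) * K^2 + 2 * K))"
      unfolding V_def
      by (rule step_ineq[OF fin piM PIb PI0 dec ub rb S_def Dir Pn CP e0 e1[folded e_def] K0 Qb0 Sn])
    then show ?thesis unfolding A1_def B1_def n_def e_def .
  qed
  define d0 where "d0 = min 1 (min (2 * CP) (1 / (2 * CP * (A1 + 1))))"
  have d0: "d0 > 0" unfolding d0_def using CP A10 by simp
  have ev_small: "eventually (\<lambda>s. eps (Suc s) < d0) sequentially"
    using order_tendstoD(2)[OF eps_lim d0] unfolding eventually_sequentially_Suc[of "\<lambda>s. eps s < d0"] .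
  define a where "a s = eps s / (2 * CP)" for s
  define b where "b s = 2 * CP * B1 * eps s" for s
  have ev: "eventually (\<lambda>s. 0 \<le> a (Suc s) \<and> a (Suc s) \<le> 1 \<and>
               V (Suc s) \<le> (1 - a (Suc s)) * V s + a (Suc s) * b (Suc s)) sequentially"
    using ev_small
  proof (rule eventually_mono)
    fix s assume es: "eps (Suc s) < d0"
    define e where "e = eps (Suc s)"
    have e0: "0 < e" using eps_pos unfolding e_def by simp
    have e1: "e \<le> 1" "e \<le> 2 * CP" "e \<le> 1 / (2 * CP * (A1 + 1))" using es unfolding e_def d0_def by auto
    have X: "0 < 2 * CP * (A1 + 1)" using CP A10 by simp
    have "e * (2 * CP * (A1 + 1)) \<le> 1" using e1(3) pos_le_divide_eq[OF X, of e 1] by simp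
    then have eA: "e * A1 \<le> 1 / (2 * CP)"
    proof -
      assume h: "e * (2 * CP * (A1 + 1)) \<le> 1"
      have "e * A1 \<le> e * (A1 + 1)" using e0 by simp
      also have "\<dots> = (e * (2 * CP * (A1 + 1))) / (2 * CP)" using CP by (simp add: field_simps)
      also have "\<dots> \<le> 1 / (2 * CP)" by (rule divide_right_mono[OF h]) (use CP in simp)
      finally show ?thesis .
    qed
    have "e^2 * A1 \<le> e / (2 * CP)"
    proof -
      have "e * (e * A1) \<le> e * (1 / (2 * CP))" using eA e0 by (intro mult_left_mono) auto
      then show ?thesis by (simp add: power2_eq_square mult.assoc)
    qed
    then have "(1 - e / CP + e^2 * A1) * V s \<le> (1 - e / (2 * CP)) * V s"
      using V0[of s] by (intro mult_right_mono) auto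
    moreover have "V (Suc s) \<le> (1 - e / CP + e^2 * A1) * V s + e^2 * B1"
      using step[of s] e1 unfolding e_def by simp
    moreover have "e^2 * B1 = a (Suc s) * b (Suc s)" using CP unfolding a_def b_def e_def
      by (simp add: power2_eq_square field_simps)
    moreover have "0 \<le> a (Suc s)" "a (Suc s) \<le> 1" using e0 e1 CP unfolding a_def e_def by auto
    ultimately show "0 \<le> a (Suc s) \<and> a (Suc s) \<le> 1 \<and>
               V (Suc s) \<le> (1 - a (Suc s)) * V s + a (Suc s) * b (Suc s)"
      unfolding a_def e_def by auto
  qed
  have adiv: "filterlim (\<lambda>n. \<Sum>s=1..n. a s) at_top sequentially"
  proof -
    have "(\<lambda>n. \<Sum>s=1..n. a s) = (\<lambda>n. (1 / (2 * CP)) * (\<Sum>s=1..n. eps s))"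
      unfolding a_def by (simp add: sum_divide_distrib)
    moreover have "filterlim (\<lambda>n. (1 / (2 * CP)) * (\<Sum>s=1..n. eps s)) at_top sequentially"
      using CP by (intro filterlim_tendsto_pos_mult_at_top[OF tendsto_const _ eps_div]) simp
    ultimately show ?thesis by simp
  qed
  have b0: "b \<longlonglongrightarrow> 0" unfolding b_def using tendsto_mult_right_zero[OF eps_lim] by blast
  have Vlim: "V \<longlonglongrightarrow> 0" by (rule recursion_to_zero[OF allI[OF V0] ev adiv b0])
  have vlim: "(\<lambda>s. \<bar>v s m\<bar>) \<longlonglongrightarrow> 0" if m: "m \<in> M" for m
  proof (rule tendsto_sandwich[of "\<lambda>_. 0" _ _ "\<lambda>s. sqrt (V s)"])
    show "\<forall>\<^sub>F s in sequentially. 0 \<le> \<bar>v s m\<bar>" by simp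
    show "\<forall>\<^sub>F s in sequentially. \<bar>v s m\<bar> \<le> sqrt (V s)"
    proof (rule always_eventually, rule allI)
      fix s
      have "v s m ^ 2 / pi m \<le> V s" unfolding V_def using m fin piM
        by (intro member_le_sum) auto
      then have "v s m ^ 2 \<le> pi m * V s" using piM m by (simp add: field_simps)
      also have "\<dots> \<le> V s" using pi_le1[OF m] V0[of s] using mult_right_mono[of "pi m" 1 "V s"] by simp
      finally show "\<bar>v s m\<bar> \<le> sqrt (V s)" by (simp add: real_le_rsqrt)
    qed
    show "(\<lambda>_. 0) \<longlonglongrightarrow> (0::real)" by simp
    show "(\<lambda>s. sqrt (V s)) \<longlonglongrightarrow> 0" using tendsto_real_sqrt[OF Vlim] by simp
  qed
  define w where "w s = (\<lambda>m. if m \<in> M then mu s m - pi m else 0)" for s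
  have wv: "w s \<in> vecs k" for s unfolding w_def vecs_def M_def by auto
  have Nb: "N (w s) \<le> (\<Sum>m\<in>M. \<bar>v s m\<bar> * N (\<lambda>x. if x = m then 1 else 0))" for s
  proof -
    have "N (w s) \<le> (\<Sum>m\<in>M. \<bar>w s m\<bar> * N (\<lambda>x. if x = m then 1 else 0))"
      using norm_bound[OF N_norm wv[of s]] unfolding M_def .
    also have "\<dots> = (\<Sum>m\<in>M. \<bar>v s m\<bar> * N (\<lambda>x. if x = m then 1 else 0))"
      unfolding w_def v_def by (intro sum.cong) auto
    finally show ?thesis .
  qed
  have N0: "N (w s) \<ge> 0" for s using N_norm wv[of s] unfolding is_norm_on_def by blast
  have "(\<lambda>s. N (w s)) \<longlonglongrightarrow> 0"
  proof (rule tendsto_sandwich[of "\<lambda>_. 0" _ _ "\<lambda>s. \<Sum>m\<in>M. \<bar>v s m\<bar> * N (\<lambda>x. if x = m then 1 else 0)"])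
    show "\<forall>\<^sub>F s in sequentially. 0 \<le> N (w s)" using N0 by simp
    show "\<forall>\<^sub>F s in sequentially. N (w s) \<le> (\<Sum>m\<in>M. \<bar>v s m\<bar> * N (\<lambda>x. if x = m then 1 else 0))"
      using Nb by simp
    show "(\<lambda>_. 0) \<longlonglongrightarrow> (0::real)" by simp
    show "(\<lambda>s. \<Sum>m\<in>M. \<bar>v s m\<bar> * N (\<lambda>x. if x = m then 1 else 0)) \<longlonglongrightarrow> 0"
      by (intro tendsto_null_sum tendsto_mult_left_zero vlim)
  qed
  then show ?thesis unfolding w_def mu_def M_def .
qed

end
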